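(* Let $(x^k)$ be generated by the augmented Lagrangian method described below, where each step satisfies the inexactness assumption described below, let $\bar x$ be a limit point of $(x^k)$, and assume that for every $\nu$ the function $h^\nu$ satisfies CPLD$_\nu$ in $\bar x$. Then $\bar x$ is a KKT point of the Feasibility GNEP.
   Context: GNEP: $N$ players, variables $x=(x^1,\ldots,x^N)\in\mathbb{R}^n$, $x^\nu\in\mathbb{R}^{n_\nu}$. Player $\nu$ solves $\min_{x^\nu}\theta_\nu(x)$ s.t. $g^\nu(x)\le0$, $h^\nu(x)\le0$, with continuously differentiable $\theta_\nu:\mathbb{R}^n\to\mathbb{R}$, $g^\nu:\mathbb{R}^n\to\mathbb{R}^{m_\nu}$, $h^\nu:\mathbb{R}^n\to\mathbb{R}^{p_\nu}$ ($p_\nu=0$ allowed); $m=\sum m_\nu$, $p=\sum p_\nu$. Notation: $v_+=\max\{0,v\}$ componentwise, $g^\nu_+(x)=(g^\nu(x))_+$; $\nabla f$ = transposed Jacobian, $\nabla_{x^\nu}f$ its rows for $x^\nu$; $\min$ of vectors componentwise; Euclidean norms. Vectors in $\mathbb{R}^m$ (resp. $\mathbb{R}^p$) are split into player blocks $\lambda^{\nu}\in\mathbb{R}^{m_\nu}$ (resp. $\mu^\nu\in\mathbb{R}^{p_\nu}$). Augmented Lagrangian of player $\nu$: $L_a^\nu(x,u;\rho)=\theta_\nu(x)+\frac{\rho}{2}\|(g^\nu(x)+u/\rho)_+\|^2$. Method: choose $x^0\in\mathbb{R}^n,\lambda^0\in\mathbb{R}^m,\mu^0\in\mathbb{R}^p$,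 an initial $u^0\in\mathbb{R}^m$, $u^{\max}\ge0$, and for each $\nu$: $\tau_\nu\in(0,1)$, $\gamma_\nu>1$, $\rho_{\nu,0}>0$. For $k=0,1,2,\dots$ (the method is assumed to run forever): (1) compute $(x^{k+1},\mu^{k+1})\in\mathbb{R}^{n+p}$ satisfying the inexactness assumption; (2) $\lambda^{\nu,k+1}=(u^{\nu,k}+\rho_{\nu,k}g^\nu(x^{k+1}))_+$; (3) for each $\nu$: if $\|\min\{-g^\nu(x^{k+1}),\lambda^{\nu,k+1}\}\|\le\tau_\nu\|\min\{-g^\nu(x^k),\lambda^{\nu,k}\}\|$ then $\rho_{\nu,k+1}=\rho_{\nu,k}$, else $\rho_{\nu,k+1}=\gamma_\nu\rho_{\nu,k}$; (4) $u^{k+1}=\min\{\lambda^{k+1},u^{\max}\}$ componentwise. Inexactness assumption: for all $k,\nu$, $\|\nabla_{x^\nu}L_a^\nu(x^{k+1},u^{\nu,k};\rho_{\nu,k})+\nabla_{x^\nu}h^\nu(x^{k+1})\mu^{\nu,k+1}\|\le\varepsilon_k$ and $\|\min\{-h^\nu(x^{k+1}),\mu^{\nu,k+1}\}\|\le\varepsilon_k'$, with $(\varepsilon_k)\subset[0,\infty)$ bounded and $\varepsilon'_k\to0$. Feasibility GNEP: player $\nu$ solves $\min_{x^\nu}\|g^\nu_+(x)\|^2$ s.t. $h^\nu(x)\le0$. A point $\bar x$ is a KKT point of it if for every $\nu$ there is $w^\nu\in\mathbb{R}^{p_\nu}$ with $\nabla_{x^\nu}\|g^\nu_+(\bar x)\|^2+\nabla_{x^\nu}h^\nu(\bar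 x)w^\nu=0$ and $\min\{-h^\nu(\bar x),w^\nu\}=0$. CPLD$_\nu$ for $h^\nu$ at $x$ with $h^\nu(x)\le0$: whenever $\nabla_{x^\nu}h_j^\nu(x)$, $j\in J$, are positively linearly dependent (a nontrivial nonnegative combination vanishes) for some $J\subset\{j:h_j^\nu(x)=0\}$, the vectors $\nabla_{x^\nu}h_j^\nu(y)$, $j\in J$, are linearly dependent for all $y$ in a neighbourhood of $x$. *)

theory Defs
  imports "HOL-Analysis.Analysis"
begin

text \<open>The players are the elements of a finite type 'p;
  coordinate i belongs to player blk i, so x^nu is the block {i. blk i = nu}.
  Vectors in R^{n_nu} are represented as vectors in real^'n that vanish outside
  the block (mask), which preserves Euclidean norms, sums, and linear dependence.\<close>

definition grad :: "(real ^ 'n \<Rightarrow> real) \<Rightarrow> real ^ 'n \<Rightarrow> real ^ 'n" where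
  "grad f x = (\<chi> i. frechet_derivative f (at x) (axis i 1))"

definition C1 :: "(real ^ 'n \<Rightarrow> real) \<Rightarrow> bool" where
  "C1 f \<longleftrightarrow> (\<forall>x. f differentiable (at x)) \<and> continuous_on UNIV (grad f)"

definition blockv :: "('n \<Rightarrow> 'p) \<Rightarrow> 'p \<Rightarrow> real ^ 'n \<Rightarrow> real ^ 'n" where
  "blockv blk nu v = (\<chi> i. if blk i = nu then v $ i else 0)"

definition aug_lag ::
  "(real ^ 'n \<Rightarrow> real) \<Rightarrow> (nat \<Rightarrow> real ^ 'n \<Rightarrow> real) \<Rightarrow> nat
   \<Rightarrow> real ^ 'n \<Rightarrow> (nat \<Rightarrow> real) \<Rightarrow> real \<Rightarrow> real" where
  "aug_lag th g m x u rho =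
     th x + rho / 2 * (L2_set (\<lambda>j. max 0 (g j x + u j / rho)) {..<m})\<^sup>2"

definition pos_lin_dep :: "(nat \<Rightarrow> real ^ 'n) \<Rightarrow> nat set \<Rightarrow> bool" where
  "pos_lin_dep v J \<longleftrightarrow>
     (\<exists>a. (\<forall>j\<in>J. a j \<ge> 0) \<and> (\<exists>j\<in>J. a j \<noteq> 0) \<and> (\<Sum>j\<in>J. a j *\<^sub>R v j) = 0)"

definition lin_dep_fam :: "(nat \<Rightarrow> real ^ 'n) \<Rightarrow> nat set \<Rightarrow> bool" where
  "lin_dep_fam v J \<longleftrightarrow>
     (\<exists>a. (\<exists>j\<in>J. a j \<noteq> 0) \<and> (\<Sum>j\<in>J. a j *\<^sub>R v j) = 0)"

definition CPLD ::
  "('n \<Rightarrow> 'p) \<Rightarrow> 'p \<Rightarrow> (nat \<Rightarrow> real ^ 'n \<Rightarrow> real) \<Rightarrow> nat \<Rightarrow> real ^ 'n \<Rightarrow> bool" where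
  "CPLD blk nu h p x \<longleftrightarrow>
     (\<forall>J. J \<subseteq> {j. j < p \<and> h j x = 0} \<longrightarrow>
        pos_lin_dep (\<lambda>j. blockv blk nu (grad (h j) x)) J \<longrightarrow>
        eventually (\<lambda>y. lin_dep_fam (\<lambda>j. blockv blk nu (grad (h j) y)) J) (nhds x))"

definition feas_KKT ::
  "('n \<Rightarrow> 'p) \<Rightarrow> ('p \<Rightarrow> nat \<Rightarrow> real ^ 'n \<Rightarrow> real) \<Rightarrow> ('p \<Rightarrow> nat)
   \<Rightarrow> ('p \<Rightarrow> nat \<Rightarrow> real ^ 'n \<Rightarrow> real) \<Rightarrow> ('p \<Rightarrow> nat) \<Rightarrow> real ^ 'n \<Rightarrow> bool" where
  "feas_KKT blk g m h p x \<longleftrightarrow>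
     (\<forall>nu. \<exists>w :: nat \<Rightarrow> real.
        blockv blk nu (grad (\<lambda>y. (L2_set (\<lambda>j. max 0 (g nu j y)) {..<m nu})\<^sup>2) x)
          + (\<Sum>j<p nu. w j *\<^sub>R blockv blk nu (grad (h nu j) x)) = 0
        \<and> (\<forall>j<p nu. min (- h nu j x) (w j) = 0))"

end

theory Submission
  imports Defs
begin


lemma maxsq_deriv: "((\<lambda>t::real. (max 0 t)\<^sup>2) has_real_derivative 2 * max 0 t) (at t)"
proof -
  consider "t > 0" | "t < 0" | "t = 0" by linarith
  then show ?thesis
  proof cases
    case 1
    have ev: "\<forall>\<^sub>F s in nhds t. (max 0 s)\<^sup>2 = s\<^sup>2"
      using eventually_nhds_in_open[of "{0<..}" t] 1
      by (auto elim!: eventually_mono)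
    have "((\<lambda>s. s\<^sup>2) has_real_derivative 2 * t) (at t)"
      by (auto intro!: derivative_eq_intros)
    then show ?thesis using 1
      by (subst DERIV_cong_ev[OF refl ev]) auto
  next
    case 2
    have ev: "\<forall>\<^sub>F s in nhds t. (max 0 s)\<^sup>2 = 0"
      using eventually_nhds_in_open[of "{..<0}" t] 2
      by (auto elim!: eventually_mono)
    have "((\<lambda>s. 0::real) has_real_derivative 0) (at t)"
      by (auto intro!: derivative_eq_intros)
    then show ?thesis using 2
      by (subst DERIV_cong_ev[OF refl ev]) auto
  next
    case 3
    have eq: "(\<lambda>y::real. (max 0 y)\<^sup>2 / y) = max 0"
      by (auto simp: max_def power2_eq_square fun_eq_iff)
    have "((\<lambda>y::real. max 0 y) \<longlongrightarrow> max 0 0) (at 0)"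
      by (intro tendsto_intros)
    then show ?thesis using 3
      by (simp add: has_field_derivative_iff eq)
  qed
qed

lemma grad_eq:
  assumes "(f has_derivative f') (at x)" "\<And>h. f' h = v \<bullet> h"
  shows "grad f x = v"
proof -
  have "frechet_derivative f (at x) = f'" using frechet_derivative_at[OF assms(1)] by simp
  then show ?thesis unfolding grad_def using assms(2)
    by (simp add: vec_eq_iff inner_axis)
qed

lemma has_grad:
  assumes "f differentiable (at x)"
  shows "(f has_derivative (\<lambda>h. grad f x \<bullet> h)) (at x)"
proof -
  let ?D = "frechet_derivative f (at x)"
  have d: "(f has_derivative ?D) (at x)" using assms frechet_derivative_works by blast
  then have lin: "linear ?D" using has_derivative_linear by blast
  have "?D h = grad f x \<bullet> h" for h
  proof -
    have "?D h = ?D (\<Sum>i\<in>UNIV. (h$i) *\<^sub>R axis i 1)"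
      using basis_expansion[of h] by (simp add: scalar_mult_eq_scaleR)
    also have "\<dots> = (\<Sum>i\<in>UNIV. h$i * ?D (axis i 1))"
      using lin by (simp add: linear_sum linear_scale)
    also have "\<dots> = grad f x \<bullet> h"
      by (simp add: grad_def inner_vec_def mult.commute)
    finally show ?thesis .
  qed
  then show ?thesis using d by (metis (no_types, lifting) ext)
qed

lemma L2sq: "(L2_set f A)\<^sup>2 = (\<Sum>j\<in>A. (f j)\<^sup>2)"
  by (simp add: L2_set_def sum_nonneg)

lemma maxsq_comp_deriv:
  assumes "G differentiable (at x)"
  shows "((\<lambda>y. (max 0 (G y + c))\<^sup>2) has_derivative
          (\<lambda>h. 2 * max 0 (G x + c) * (grad G x \<bullet> h))) (at x)"
proof -
  have f: "((\<lambda>y. G y + c) has_derivative (\<lambda>h. grad G x \<bullet> h)) (at x)"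
    using has_grad[OF assms] by (auto intro!: derivative_eq_intros)
  have g: "((\<lambda>t::real. (max 0 t)\<^sup>2) has_derivative (*) (2 * max 0 (G x + c))) (at (G x + c))"
    using maxsq_deriv[of "G x + c"] by (simp add: has_field_derivative_def)
  from diff_chain_at[OF f g] show ?thesis by (simp add: o_def mult_ac)
qed

lemma inner_sum_scale: "(\<Sum>j\<in>A. a j *\<^sub>R v j) \<bullet> (h::'a::real_inner) = (\<Sum>j\<in>A. a j * (v j \<bullet> h))"
  by (simp add: inner_sum_left)

lemma sumsq_deriv:
  assumes "\<And>j. j < M \<Longrightarrow> G j differentiable (at x)"
  shows "((\<lambda>y. (L2_set (\<lambda>j. max 0 (G j y + c j)) {..<M})\<^sup>2) has_derivative
          (\<lambda>h. \<Sum>j<M. 2 * max 0 (G j x + c j) * (grad (G j) x \<bullet> h))) (at x)"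
  unfolding L2sq by (intro has_derivative_sum maxsq_comp_deriv assms) simp

lemma grad_sumsq:
  assumes "\<And>j. j < M \<Longrightarrow> G j differentiable (at x)"
  shows "grad (\<lambda>y. (L2_set (\<lambda>j. max 0 (G j y)) {..<M})\<^sup>2) x
     = (\<Sum>j<M. (2 * max 0 (G j x)) *\<^sub>R grad (G j) x)"
proof (rule grad_eq)
  show "((\<lambda>y. (L2_set (\<lambda>j. max 0 (G j y)) {..<M})\<^sup>2) has_derivative
          (\<lambda>h. \<Sum>j<M. 2 * max 0 (G j x) * (grad (G j) x \<bullet> h))) (at x)"
    using sumsq_deriv[OF assms, where c="\<lambda>j. 0"] by simp
qed (simp only: inner_sum_scale)

lemma grad_auglag:
  assumes "th differentiable (at x)" "\<And>j. j < M \<Longrightarrow> G j differentiable (at x)"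
  shows "grad (\<lambda>y. aug_lag th G M y u R) x
     = grad th x + (\<Sum>j<M. (R * max 0 (G j x + u j / R)) *\<^sub>R grad (G j) x)"
proof (rule grad_eq)
  show "((\<lambda>y. aug_lag th G M y u R) has_derivative
     (\<lambda>h. grad th x \<bullet> h + R / 2 * (\<Sum>j<M. 2 * max 0 (G j x + u j / R) * (grad (G j) x \<bullet> h)))) (at x)"
    unfolding aug_lag_def
    by (intro has_derivative_add has_grad assms has_derivative_mult_right sumsq_deriv)
  show "grad th x \<bullet> h + R / 2 * (\<Sum>j<M. 2 * max 0 (G j x + u j / R) * (grad (G j) x \<bullet> h))
     = (grad th x + (\<Sum>j<M. (R * max 0 (G j x + u j / R)) *\<^sub>R grad (G j) x)) \<bullet> h" for h
    by (simp only: inner_add_left inner_sum_scale sum_distrib_left) (simp add: algebra_simps)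
qed



lemma conic_cara:
  fixes v :: "nat \<Rightarrow> real^'n"
  assumes "finite J" "\<forall>j\<in>J. 0 \<le> c j"
  shows "\<exists>J' c'. J' \<subseteq> J \<and> (\<forall>j\<in>J'. 0 \<le> c' j) \<and>
           (\<Sum>j\<in>J. c j *\<^sub>R v j) = (\<Sum>j\<in>J'. c' j *\<^sub>R v j) \<and> \<not> lin_dep_fam v J'"
  using assms
proof (induction J arbitrary: c rule: finite_psubset_induct)
  case (psubset J)
  show ?case
  proof (cases "lin_dep_fam v J")
    case False
    then show ?thesis using psubset.prems by blast
  next
    case True
    then obtain \<beta> j1 where j1: "j1 \<in> J" "\<beta> j1 \<noteq> 0" and sb: "(\<Sum>j\<in>J. \<beta> j *\<^sub>R v j) = 0"
      unfolding lin_dep_fam_def by blast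
    define b where "b = (if \<beta> j1 > 0 then \<beta> else (\<lambda>j. - \<beta> j))"
    have bj1: "b j1 > 0" using j1 by (auto simp: b_def)
    have sbb: "(\<Sum>j\<in>J. b j *\<^sub>R v j) = 0"
      using sb by (auto simp: b_def sum_negf)
    define P where "P = {j\<in>J. b j > 0}"
    have Pfin: "finite P" and Pne: "P \<noteq> {}" using psubset.hyps j1 bj1 by (auto simp: P_def)
    define t where "t = Min ((\<lambda>j. c j / b j) ` P)"
    obtain j0 where j0: "j0 \<in> P" "t = c j0 / b j0"
    proof -
      have "t \<in> (\<lambda>j. c j / b j) ` P" unfolding t_def using Pfin Pne by (intro Min_in) auto
      then show ?thesis using that by blast
    qed
    have tle: "t \<le> c j / b j" if "j \<in> P" for j
      unfolding t_def using Pfin that by auto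
    have t0: "t \<ge> 0" using j0 psubset.prems(1) by (auto simp: P_def)
    define c' where "c' = (\<lambda>j. c j - t * b j)"
    have c'nn: "\<forall>j\<in>J - {j0}. 0 \<le> c' j"
    proof
      fix j assume j: "j \<in> J - {j0}"
      show "0 \<le> c' j"
      proof (cases "b j > 0")
        case True
        then have "t \<le> c j / b j" using tle j by (auto simp: P_def)
        then show ?thesis using True by (simp add: c'_def pos_le_divide_eq)
      next
        case False
        then have "t * b j \<le> 0" using t0 by (simp add: mult_nonneg_nonpos)
        moreover have "0 \<le> c j" using psubset.prems(1) j by auto
        ultimately show ?thesis by (simp add: c'_def)
      qed
    qed
    have c'j0: "c' j0 = 0" using j0 by (auto simp: c'_def P_def)
    have eq0: "(\<Sum>j\<in>J. c' j *\<^sub>R v j) = (\<Sum>j\<in>J. c j *\<^sub>R v j) - t *\<^sub>R (\<Sum>j\<in>J. b j *\<^sub>R v j)"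
      by (simp add: c'_def scaleR_diff_left sum_subtractf scaleR_sum_right)
    then have eq1: "(\<Sum>j\<in>J. c j *\<^sub>R v j) = (\<Sum>j\<in>J - {j0}. c' j *\<^sub>R v j)"
    proof -
      have "j0 \<in> J" using j0 by (auto simp: P_def)
      then have "(\<Sum>j\<in>J. c' j *\<^sub>R v j) = c' j0 *\<^sub>R v j0 + (\<Sum>j\<in>J - {j0}. c' j *\<^sub>R v j)"
        by (rule sum.remove[OF psubset.hyps(1)])
      moreover have "(\<Sum>j\<in>J. c' j *\<^sub>R v j) = (\<Sum>j\<in>J. c j *\<^sub>R v j)"
        by (simp only: eq0 sbb scaleR_zero_right diff_zero)
      ultimately show ?thesis using c'j0 by (metis add_0 scale_zero_left)
    qed
    have "J - {j0} \<subset> J" using j0 by (auto simp: P_def)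
    from psubset.IH[OF this c'nn] obtain J' c'' where
      "J' \<subseteq> J - {j0}" "\<forall>j\<in>J'. 0 \<le> c'' j"
      "(\<Sum>j\<in>J - {j0}. c' j *\<^sub>R v j) = (\<Sum>j\<in>J'. c'' j *\<^sub>R v j)" "\<not> lin_dep_fam v J'"
      by blast
    then have "J' \<subseteq> J \<and> (\<forall>j\<in>J'. 0 \<le> c'' j) \<and>
           (\<Sum>j\<in>J. c j *\<^sub>R v j) = (\<Sum>j\<in>J'. c'' j *\<^sub>R v j) \<and> \<not> lin_dep_fam v J'"
      using eq1 by auto
    then show ?thesis by blast
  qed
qed



lemma finite_subseq_conv:
  fixes f :: "nat \<Rightarrow> nat \<Rightarrow> real"
  assumes "finite A" "\<And>j. j \<in> A \<Longrightarrow> bounded (range (\<lambda>l. f l j))"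
  shows "\<exists>r L. strict_mono r \<and> (\<forall>j\<in>A. (\<lambda>l. f (r l) j) \<longlonglongrightarrow> L j)"
  using assms
proof (induction A rule: finite_induct)
  case empty
  show ?case by (rule exI[of _ id]) (auto simp: strict_mono_def)
next
  case (insert a A)
  then obtain r L where r: "strict_mono r" "\<forall>j\<in>A. (\<lambda>l. f (r l) j) \<longlonglongrightarrow> L j" by auto
  have "bounded (range (\<lambda>l. f (r l) a))"
    using insert.prems[of a] by (rule bounded_subset) auto
  from bounded_imp_convergent_subsequence[OF this] obtain l0 r' where
    r': "strict_mono r'" "((\<lambda>l. f (r l) a) \<circ> r') \<longlonglongrightarrow> l0" by blast
  have "strict_mono (r \<circ> r')" using r(1) r'(1) by (rule strict_mono_o)
  moreover have "\<forall>j\<in>insert a A. (\<lambda>l. f ((r \<circ> r') l) j) \<longlonglongrightarrow> (L(a := l0)) j"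
  proof
    fix j assume j: "j \<in> insert a A"
    show "(\<lambda>l. f ((r \<circ> r') l) j) \<longlonglongrightarrow> (L(a := l0)) j"
    proof (cases "j = a")
      case True then show ?thesis using r'(2) by (simp add: o_def)
    next
      case False
      then have "j \<in> A" "j \<noteq> a" using j by auto
      then have "(\<lambda>l. f (r l) j) \<longlonglongrightarrow> L j" using r(2) by auto
      from LIMSEQ_subseq_LIMSEQ[OF this r'(1)] show ?thesis using \<open>j \<noteq> a\<close> by (simp add: o_def)
    qed
  qed
  ultimately show ?case by blast
qed



lemma key:
  fixes G :: "nat \<Rightarrow> real^'n \<Rightarrow> real^'n" and y :: "nat \<Rightarrow> real^'n"
  assumes finA: "finite A"
    and cont: "\<And>j. j \<in> A \<Longrightarrow> isCont (G j) xb"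
    and ylim: "y \<longlonglongrightarrow> xb" and alim: "a \<longlonglongrightarrow> as"
    and cnn: "\<And>l j. j \<in> A \<Longrightarrow> 0 \<le> c l j"
    and lim0: "(\<lambda>l. a l + (\<Sum>j\<in>A. c l j *\<^sub>R G j (y l))) \<longlonglongrightarrow> 0"
    and cpld: "\<And>J. J \<subseteq> A \<Longrightarrow> pos_lin_dep (\<lambda>j. G j xb) J \<Longrightarrow>
                 eventually (\<lambda>z. lin_dep_fam (\<lambda>j. G j z) J) (nhds xb)"
  shows "\<exists>w. (\<forall>j\<in>A. 0 \<le> w j) \<and> as + (\<Sum>j\<in>A. w j *\<^sub>R G j xb) = 0"
proof -
  have "\<forall>l. \<exists>J' c'. J' \<subseteq> A \<and> (\<forall>j\<in>J'. 0 \<le> c' j) \<and>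
           (\<Sum>j\<in>A. c l j *\<^sub>R G j (y l)) = (\<Sum>j\<in>J'. c' j *\<^sub>R G j (y l)) \<and>
           \<not> lin_dep_fam (\<lambda>j. G j (y l)) J'"
  proof
    fix l
    have "\<forall>j\<in>A. 0 \<le> c l j" using cnn by auto
    from conic_cara[OF finA this, of "\<lambda>j. G j (y l)"]
    show "\<exists>J' c'. J' \<subseteq> A \<and> (\<forall>j\<in>J'. 0 \<le> c' j) \<and>
           (\<Sum>j\<in>A. c l j *\<^sub>R G j (y l)) = (\<Sum>j\<in>J'. c' j *\<^sub>R G j (y l)) \<and>
           \<not> lin_dep_fam (\<lambda>j. G j (y l)) J'" .
  qed
  from choice[OF this] obtain JJ where "\<forall>l. \<exists>c'. JJ l \<subseteq> A \<and> (\<forall>j\<in>JJ l. 0 \<le> c' j) \<and>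
           (\<Sum>j\<in>A. c l j *\<^sub>R G j (y l)) = (\<Sum>j\<in>JJ l. c' j *\<^sub>R G j (y l)) \<and>
           \<not> lin_dep_fam (\<lambda>j. G j (y l)) (JJ l)" by blast
  from choice[OF this] obtain cc where JJ0: "\<forall>l. JJ l \<subseteq> A \<and> (\<forall>j\<in>JJ l. 0 \<le> cc l j) \<and>
           (\<Sum>j\<in>A. c l j *\<^sub>R G j (y l)) = (\<Sum>j\<in>JJ l. cc l j *\<^sub>R G j (y l)) \<and>
           \<not> lin_dep_fam (\<lambda>j. G j (y l)) (JJ l)" by blast
  have JJ: "\<And>l. JJ l \<subseteq> A" "\<And>l j. j \<in> JJ l \<Longrightarrow> 0 \<le> cc l j"
    "\<And>l. (\<Sum>j\<in>A. c l j *\<^sub>R G j (y l)) = (\<Sum>j\<in>JJ l. cc l j *\<^sub>R G j (y l))"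
    "\<And>l. \<not> lin_dep_fam (\<lambda>j. G j (y l)) (JJ l)"
    using JJ0 by blast+
  have "finite (range JJ)" using JJ(1) finA
    by (intro finite_subset[of "range JJ" "Pow A"]) auto
  then obtain J where "J \<in> range JJ" and infJ: "infinite (JJ -` {J})"
    using inf_img_fin_dom[of JJ UNIV] by auto
  from infinite_enumerate[OF infJ] obtain r1 :: "nat \<Rightarrow> nat" where r1: "strict_mono r1" "\<And>l. JJ (r1 l) = J"
    by (auto simp: vimage_def)
  have JA: "J \<subseteq> A" using JJ(1)[of "r1 0"] r1(2)[of 0] by simp
  have finJ: "finite J" using JA finA finite_subset by blast
  define d where "d l j = cc (r1 l) j" for l j
  define s where "s l = 1 + (\<Sum>j\<in>J. d l j)" for l
  have dnn: "0 \<le> d l j" if "j \<in> J" for l j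
    using JJ(2)[of j "r1 l"] r1(2) that by (simp add: d_def)
  have s1: "s l \<ge> 1" for l using dnn by (simp add: s_def sum_nonneg)
  have spos: "s l > 0" for l using s1[of l] by simp
  obtain k0 :: nat where k0: "k0 \<notin> J" using ex_new_if_finite[OF infinite_UNIV_nat finJ] by auto
  define F where "F l j = (if j = k0 then 1 / s l else d l j / s l)" for l j
  have Fb: "0 \<le> F l j \<and> F l j \<le> 1" if "j \<in> insert k0 J" for l j
  proof -
    have "d l j \<le> s l" if "j \<in> J"
    proof -
      have "d l j \<le> (\<Sum>j\<in>J. d l j)" using finJ that dnn by (intro member_le_sum) auto
      then show ?thesis by (simp add: s_def)
    qed
    then show ?thesis using that s1[of l] dnn k0
      by (auto simp: F_def divide_le_eq_1 intro!: divide_nonneg_pos)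
  qed
  have "bounded (range (\<lambda>l. F l j))" if "j \<in> insert k0 J" for j
    using Fb[OF that] by (intro boundedI[where B=1]) auto
  from finite_subseq_conv[of "insert k0 J" F, OF _ this] finJ obtain r2 L where
    r2: "strict_mono r2" "\<And>j. j \<in> insert k0 J \<Longrightarrow> (\<lambda>l. F (r2 l) j) \<longlonglongrightarrow> L j"
    by auto
  define t where "t = L k0"
  have tlim: "(\<lambda>l. 1 / s (r2 l)) \<longlonglongrightarrow> t" using r2(2)[of k0] by (simp add: F_def t_def)
  have Dlim: "(\<lambda>l. d (r2 l) j / s (r2 l)) \<longlonglongrightarrow> L j" if "j \<in> J" for j
  proof -
    have "j \<noteq> k0" using that k0 by auto
    then show ?thesis using r2(2)[of j] that by (simp add: F_def)
  qed
  have t0: "t \<ge> 0"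
    by (rule LIMSEQ_le_const[OF tlim]) (use spos in \<open>auto intro!: exI[of _ 0] less_imp_le\<close>)
  have L0: "L j \<ge> 0" if "j \<in> J" for j
    by (rule LIMSEQ_le_const[OF Dlim[OF that]]) (use spos dnn that in \<open>auto intro!: exI[of _ 0] divide_nonneg_pos\<close>)
  have sumeq: "1 / s (r2 l) + (\<Sum>j\<in>J. d (r2 l) j / s (r2 l)) = 1" for l
  proof -
    have "1 / s (r2 l) + (\<Sum>j\<in>J. d (r2 l) j / s (r2 l)) = (1 + (\<Sum>j\<in>J. d (r2 l) j)) / s (r2 l)"
      by (simp add: sum_divide_distrib[symmetric] add_divide_distrib)
    also have "\<dots> = 1" using spos[of "r2 l"] unfolding s_def by simp
    finally show ?thesis .
  qed
  have "(\<lambda>l. 1 / s (r2 l) + (\<Sum>j\<in>J. d (r2 l) j / s (r2 l))) \<longlonglongrightarrow> t + (\<Sum>j\<in>J. L j)"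
    by (intro tendsto_intros tlim Dlim)
  then have tsum: "t + (\<Sum>j\<in>J. L j) = 1" using sumeq by (simp add: LIMSEQ_const_iff)
  define R where "R = r1 \<circ> r2"
  have R: "strict_mono R" unfolding R_def using r1(1) r2(1) by (rule strict_mono_o)
  define z where "z l = a l + (\<Sum>j\<in>A. c l j *\<^sub>R G j (y l))" for l
  have zR: "(\<lambda>l. z (R l)) \<longlonglongrightarrow> 0" using LIMSEQ_subseq_LIMSEQ[OF lim0 R] by (simp add: z_def o_def)
  have zR': "z (R l) = a (R l) + (\<Sum>j\<in>J. d (r2 l) j *\<^sub>R G j (y (R l)))" for l
    unfolding z_def JJ(3) by (simp add: R_def d_def r1(2))
  have yR: "(\<lambda>l. y (R l)) \<longlonglongrightarrow> xb" using LIMSEQ_subseq_LIMSEQ[OF ylim R] by (simp add: o_def)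
  have aR: "(\<lambda>l. a (R l)) \<longlonglongrightarrow> as" using LIMSEQ_subseq_LIMSEQ[OF alim R] by (simp add: o_def)
  have GR: "(\<lambda>l. G j (y (R l))) \<longlonglongrightarrow> G j xb" if "j \<in> J" for j
    using isCont_tendsto_compose[OF cont yR] that JA by auto
  have A1: "(\<lambda>l. (1 / s (r2 l)) *\<^sub>R z (R l)) \<longlonglongrightarrow> t *\<^sub>R 0"
    by (intro tendsto_intros tlim zR)
  have E: "(\<lambda>l. (1 / s (r2 l)) *\<^sub>R z (R l)) =
      (\<lambda>l. (1 / s (r2 l)) *\<^sub>R a (R l) + (\<Sum>j\<in>J. (d (r2 l) j / s (r2 l)) *\<^sub>R G j (y (R l))))"
    by (simp add: zR' scaleR_add_right scaleR_sum_right)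
  have A2: "(\<lambda>l. (1 / s (r2 l)) *\<^sub>R a (R l) + (\<Sum>j\<in>J. (d (r2 l) j / s (r2 l)) *\<^sub>R G j (y (R l))))
      \<longlonglongrightarrow> t *\<^sub>R as + (\<Sum>j\<in>J. L j *\<^sub>R G j xb)"
    by (intro tendsto_intros tlim aR Dlim GR)
  have main: "t *\<^sub>R as + (\<Sum>j\<in>J. L j *\<^sub>R G j xb) = 0"
    using LIMSEQ_unique[OF A2 A1[unfolded E]] by simp
  show ?thesis
  proof (cases "t > 0")
    case True
    define w where "w j = (if j \<in> J then L j / t else 0)" for j
    have "(\<Sum>j\<in>A. w j *\<^sub>R G j xb) = (\<Sum>j\<in>J. w j *\<^sub>R G j xb)"
      using JA finA by (intro sum.mono_neutral_right) (auto simp: w_def)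
    also have "\<dots> = (1 / t) *\<^sub>R (\<Sum>j\<in>J. L j *\<^sub>R G j xb)"
      by (simp add: w_def scaleR_sum_right)
    also have "\<dots> = (1 / t) *\<^sub>R (- (t *\<^sub>R as))"
    proof -
      have "(\<Sum>j\<in>J. L j *\<^sub>R G j xb) = - (t *\<^sub>R as)"
        using main by (metis add.commute eq_neg_iff_add_eq_0)
      then show ?thesis by (simp only:)
    qed
    also have "\<dots> = - as" using True by simp
    finally have "as + (\<Sum>j\<in>A. w j *\<^sub>R G j xb) = 0" by simp
    moreover have "\<forall>j\<in>A. 0 \<le> w j" using L0 True by (auto simp: w_def)
    ultimately show ?thesis by blast
  next
    case False
    then have "t = 0" using t0 by simp
    then have "(\<Sum>j\<in>J. L j) = 1" using tsum by simp
    then obtain j1 where "j1 \<in> J" "L j1 \<noteq> 0" by (metis sum.neutral zero_neq_one)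
    moreover have "(\<Sum>j\<in>J. L j *\<^sub>R G j xb) = 0" using main \<open>t = 0\<close> by simp
    ultimately have "pos_lin_dep (\<lambda>j. G j xb) J" using L0 unfolding pos_lin_dep_def by blast
    from cpld[OF JA this] have "eventually (\<lambda>l. lin_dep_fam (\<lambda>j. G j (y (R l))) J) sequentially"
      using eventually_compose_filterlim yR by blast
    then obtain l where "lin_dep_fam (\<lambda>j. G j (y (R l))) J" by (meson eventually_sequentially order.refl)
    moreover have "\<not> lin_dep_fam (\<lambda>j. G j (y (R l))) J"
      using JJ(4)[of "r1 (r2 l)"] r1(2) by (simp add: R_def)
    ultimately show ?thesis by blast
  qed
qed



lemma abs_le_L2: "finite A \<Longrightarrow> i \<in> A \<Longrightarrow> \<bar>f i\<bar> \<le> L2_set f A"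
proof -
  assume "finite A" "i \<in> A"
  then have "\<bar>f i\<bar> \<le> L2_set (\<lambda>j. \<bar>f j\<bar>) A" by (rule member_le_L2_set)
  also have "L2_set (\<lambda>j. \<bar>f j\<bar>) A = L2_set f A" by (simp add: L2_set_def)
  finally show ?thesis .
qed

lemma blockv_add: "blockv blk nu (a + b) = blockv blk nu a + blockv blk nu b"
  by (simp add: blockv_def vec_eq_iff)
lemma blockv_scaleR: "blockv blk nu (c *\<^sub>R a) = c *\<^sub>R blockv blk nu a"
  by (simp add: blockv_def vec_eq_iff)
lemma blockv_zero: "blockv blk nu 0 = 0"
  by (simp add: blockv_def vec_eq_iff)
lemma linear_blockv: "linear (blockv blk nu)"
  by (rule linearI) (simp_all add: blockv_add blockv_scaleR)
lemma blockv_sum: "blockv blk nu (\<Sum>j\<in>A. f j) = (\<Sum>j\<in>A. blockv blk nu (f j))"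
  by (rule linear_sum[OF linear_blockv])
lemma bl_blockv: "bounded_linear (blockv blk nu)"
  using linear_blockv by (simp only: linear_conv_bounded_linear)

lemma C1_diff: "C1 f \<Longrightarrow> f differentiable (at x)"
  by (simp add: C1_def)
lemma C1_cont: "C1 f \<Longrightarrow> isCont f x"
  by (simp add: C1_def differentiable_imp_continuous_within)
lemma C1_grad_cont: "C1 f \<Longrightarrow> isCont (\<lambda>z. blockv blk nu (grad f z)) x"
proof -
  assume "C1 f"
  then have "isCont (grad f) x" by (simp add: C1_def continuous_on_eq_continuous_at)
  from continuous_at_compose[OF this linear_continuous_at[OF bl_blockv]]
  show ?thesis by (simp add: o_def)
qed

locale gnep =
  fixes blk :: "'n::finite \<Rightarrow> 'p::finite"
    and th :: "'p \<Rightarrow> real ^ 'n \<Rightarrow> real"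
    and g :: "'p \<Rightarrow> nat \<Rightarrow> real ^ 'n \<Rightarrow> real" and m :: "'p \<Rightarrow> nat"
    and h :: "'p \<Rightarrow> nat \<Rightarrow> real ^ 'n \<Rightarrow> real" and p :: "'p \<Rightarrow> nat"
    and x :: "nat \<Rightarrow> real ^ 'n"
    and lam :: "nat \<Rightarrow> 'p \<Rightarrow> nat \<Rightarrow> real"
    and mu :: "nat \<Rightarrow> 'p \<Rightarrow> nat \<Rightarrow> real"
    and u :: "nat \<Rightarrow> 'p \<Rightarrow> nat \<Rightarrow> real"
    and rho :: "nat \<Rightarrow> 'p \<Rightarrow> real"
    and umax :: "'p \<Rightarrow> nat \<Rightarrow> real"
    and tau gamma :: "'p \<Rightarrow> real"
    and eps eps' :: "nat \<Rightarrow> real"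
    and xbar :: "real ^ 'n"
  assumes C1_th: "\<And>nu. C1 (th nu)"
    and C1_g: "\<And>nu j. j < m nu \<Longrightarrow> C1 (g nu j)"
    and C1_h: "\<And>nu j. j < p nu \<Longrightarrow> C1 (h nu j)"
    and umax_nonneg: "\<And>nu j. j < m nu \<Longrightarrow> umax nu j \<ge> 0"
    and tau: "\<And>nu. 0 < tau nu \<and> tau nu < 1"
    and gamma: "\<And>nu. gamma nu > 1"
    and rho0: "\<And>nu. rho 0 nu > 0"
    and step_lam: "\<And>k nu j. j < m nu \<Longrightarrow>
        lam (Suc k) nu j = max 0 (u k nu j + rho k nu * g nu j (x (Suc k)))"
    and step_rho: "\<And>k nu. rho (Suc k) nu =
        (if L2_set (\<lambda>j. min (- g nu j (x (Suc k))) (lam (Suc k) nu j)) {..<m nu}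
              \<le> tau nu * L2_set (\<lambda>j. min (- g nu j (x k)) (lam k nu j)) {..<m nu}
         then rho k nu else gamma nu * rho k nu)"
    and step_u: "\<And>k nu j. j < m nu \<Longrightarrow> u (Suc k) nu j = min (lam (Suc k) nu j) (umax nu j)"
    and inexact1: "\<And>k nu.
        norm (blockv blk nu (grad (\<lambda>y. aug_lag (th nu) (g nu) (m nu) y (u k nu) (rho k nu)) (x (Suc k)))
              + (\<Sum>j<p nu. mu (Suc k) nu j *\<^sub>R blockv blk nu (grad (h nu j) (x (Suc k)))))
        \<le> eps k"
    and inexact2: "\<And>k nu.
        L2_set (\<lambda>j. min (- h nu j (x (Suc k))) (mu (Suc k) nu j)) {..<p nu} \<le> eps' k"
    and eps_nonneg: "\<And>k. eps k \<ge> 0"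
    and eps_bdd: "bounded (range eps)"
    and eps'_lim: "eps' \<longlonglongrightarrow> 0"
    and limpt: "\<exists>r. strict_mono r \<and> (x \<circ> r) \<longlonglongrightarrow> xbar"
    and cpld: "\<And>nu. CPLD blk nu (h nu) (p nu) xbar"
begin

definition "rr = (SOME r. strict_mono r \<and> (x \<circ> r) \<longlonglongrightarrow> xbar)"

lemma rr: "strict_mono rr" "(\<lambda>l. x (rr l)) \<longlonglongrightarrow> xbar"
  using someI_ex[OF limpt] unfolding rr_def by (auto simp: o_def)

definition "qq l = rr (Suc l) - 1"

lemma qq_Suc: "Suc (qq l) = rr (Suc l)"
  using seq_suble[OF rr(1), of "Suc l"] by (simp add: qq_def)

lemma qq_mono: "strict_mono qq"
  unfolding strict_mono_Suc_iff
proof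
  fix l
  have "rr (Suc l) < rr (Suc (Suc l))" using rr(1) by (simp add: strict_mono_Suc_iff)
  then show "qq l < qq (Suc l)" using qq_Suc[of l] qq_Suc[of "Suc l"] by simp
qed

lemma xq: "(\<lambda>l. x (Suc (qq l))) \<longlonglongrightarrow> xbar"
  unfolding qq_Suc using LIMSEQ_Suc[OF rr(2)] .

lemma eps'q: "(\<lambda>l. eps' (qq l)) \<longlonglongrightarrow> 0"
  using LIMSEQ_subseq_LIMSEQ[OF eps'_lim qq_mono] by (simp add: o_def)

lemma mu_bound: "j < p nu \<Longrightarrow> \<bar>min (- h nu j (x (Suc k))) (mu (Suc k) nu j)\<bar> \<le> eps' k"
  using abs_le_L2[of "{..<p nu}" j "\<lambda>j. min (- h nu j (x (Suc k))) (mu (Suc k) nu j)"]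
    inexact2[where k=k and nu=nu] by simp

lemma hle: assumes j: "j < p nu" shows "h nu j xbar \<le> 0"
proof -
  have b: "h nu j (x (Suc (qq l))) \<le> eps' (qq l)" for l
    using mu_bound[OF j, of "qq l"] by (auto simp: abs_le_iff min_def split: if_splits)
  have "(\<lambda>l. h nu j (x (Suc (qq l)))) \<longlonglongrightarrow> h nu j xbar"
    using isCont_tendsto_compose[OF C1_cont[OF C1_h[OF j]] xq] .
  from LIMSEQ_le[OF this eps'q] b show ?thesis by auto
qed

definition "EE nu k = L2_set (\<lambda>j. min (- g nu j (x k)) (lam k nu j)) {..<m nu}"

lemma caseA:
  assumes A: "\<exists>k0. \<forall>k\<ge>k0. EE nu (Suc k) \<le> tau nu * EE nu k" and j: "j < m nu"
  shows "g nu j xbar \<le> 0"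
proof -
  obtain k0 where k0: "\<And>k. k \<ge> k0 \<Longrightarrow> EE nu (Suc k) \<le> tau nu * EE nu k" using A by blast
  have tp: "0 < tau nu" "tau nu < 1" using tau[of nu] by auto
  have ind: "EE nu (n + k0) \<le> tau nu ^ n * EE nu k0" for n
  proof (induction n)
    case 0 then show ?case by simp
  next
    case (Suc n)
    have "EE nu (Suc n + k0) \<le> tau nu * EE nu (n + k0)" using k0[of "n + k0"] by simp
    also have "\<dots> \<le> tau nu * (tau nu ^ n * EE nu k0)"
      using Suc.IH tp by (intro mult_left_mono) auto
    finally show ?case by simp
  qed
  have "(\<lambda>n. tau nu ^ n * EE nu k0) \<longlonglongrightarrow> 0"
    using tp by (intro tendsto_mult_left_zero LIMSEQ_power_zero) auto
  then have "(\<lambda>n. EE nu (n + k0)) \<longlonglongrightarrow> 0"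
    by (rule Lim_null_comparison[rotated]) (use ind in \<open>auto simp: EE_def\<close>)
  then have E0: "(\<lambda>k. EE nu k) \<longlonglongrightarrow> 0" by (rule LIMSEQ_offset)
  have Er: "(\<lambda>l. EE nu (rr l)) \<longlonglongrightarrow> 0" using LIMSEQ_subseq_LIMSEQ[OF E0 rr(1)] by (simp add: o_def)
  have b: "g nu j (x (rr l)) \<le> EE nu (rr l)" for l
  proof -
    have "\<bar>min (- g nu j (x (rr l))) (lam (rr l) nu j)\<bar> \<le> EE nu (rr l)"
      unfolding EE_def using j by (intro abs_le_L2) auto
    then show ?thesis by (auto simp: abs_le_iff min_def split: if_splits)
  qed
  have "(\<lambda>l. g nu j (x (rr l))) \<longlonglongrightarrow> g nu j xbar"
    using isCont_tendsto_compose[OF C1_cont[OF C1_g[OF j]] rr(2)] .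
  from LIMSEQ_le[OF this Er] b show ?thesis by auto
qed

lemma rho_step: "rho (Suc k) nu = (if EE nu (Suc k) \<le> tau nu * EE nu k then rho k nu else gamma nu * rho k nu)"
  using step_rho[where k=k and nu=nu] by (simp add: EE_def)

lemma rho_pos: "rho k nu > 0"
proof (induction k)
  case 0 then show ?case using rho0 by simp
next
  case (Suc k) then show ?case using gamma[of nu] by (simp add: rho_step)
qed

lemma rho_mono: "rho k nu \<le> rho (Suc k) nu"
  using rho_pos[of k nu] gamma[of nu] by (simp add: rho_step)

lemma rho_incseq: "incseq (\<lambda>k. rho k nu)"
  by (rule incseq_SucI) (rule rho_mono)

lemma rho_inf:
  assumes B: "\<not> (\<exists>k0. \<forall>k\<ge>k0. EE nu (Suc k) \<le> tau nu * EE nu k)"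
  shows "filterlim (\<lambda>k. rho k nu) at_top sequentially"
proof -
  have g1: "gamma nu > 1" by (rule gamma)
  have grow: "\<exists>k. rho 0 nu * gamma nu ^ n \<le> rho k nu" for n
  proof (induction n)
    case 0 then show ?case by auto
  next
    case (Suc n)
    then obtain k where k: "rho 0 nu * gamma nu ^ n \<le> rho k nu" by blast
    from B obtain k' where k': "k' \<ge> k" "\<not> EE nu (Suc k') \<le> tau nu * EE nu k'" by blast
    have "rho k nu \<le> rho k' nu" using rho_incseq k'(1) by (simp add: incseq_def)
    then have "rho 0 nu * gamma nu ^ n \<le> rho k' nu" using k by simp
    then have "gamma nu * (rho 0 nu * gamma nu ^ n) \<le> gamma nu * rho k' nu"
      using g1 by (intro mult_left_mono) auto
    also have "\<dots> = rho (Suc k') nu" using k'(2) by (simp add: rho_step)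
    finally show ?case by (auto simp: mult_ac)
  qed
  show ?thesis unfolding filterlim_at_top
  proof
    fix Z :: real
    obtain n where n: "Z / rho 0 nu < gamma nu ^ n" using real_arch_pow[OF g1] by blast
    then have "Z < rho 0 nu * gamma nu ^ n" using rho_pos[of 0 nu] by (simp add: divide_less_eq mult_ac)
    moreover obtain k where "rho 0 nu * gamma nu ^ n \<le> rho k nu" using grow[of n] by blast
    ultimately have "Z \<le> rho k nu" by linarith
    then have "\<forall>k'\<ge>k. Z \<le> rho k' nu" using rho_incseq by (auto simp: incseq_def intro: order.trans)
    then show "\<forall>\<^sub>F k' in sequentially. Z \<le> rho k' nu" by (auto simp: eventually_sequentially)
  qed
qed

lemma iR_lim:
  assumes B: "\<not> (\<exists>k0. \<forall>k\<ge>k0. EE nu (Suc k) \<le> tau nu * EE nu k)"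
  shows "(\<lambda>l. 1 / rho (qq l) nu) \<longlonglongrightarrow> 0"
proof -
  have "filterlim (\<lambda>l. rho (qq l) nu) at_top sequentially"
    using filterlim_compose[OF rho_inf[OF B] filterlim_subseq[OF qq_mono]] .
  from tendsto_inverse_0_at_top[OF this] show ?thesis by (simp add: inverse_eq_divide)
qed

lemma U_bound: assumes j: "j < m nu" shows "\<bar>u k nu j\<bar> \<le> max (umax nu j) \<bar>u 0 nu j\<bar>"
proof (cases k)
  case 0 then show ?thesis by simp
next
  case (Suc k')
  have "u k nu j = min (lam k nu j) (umax nu j)" using step_u[OF j, where k=k'] Suc by simp
  moreover have "lam k nu j \<ge> 0" using step_lam[OF j, where k=k'] Suc by simp
  moreover have "umax nu j \<ge> 0" using umax_nonneg[OF j] .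
  ultimately show ?thesis by (auto simp: abs_le_iff min_def)
qed

lemma Uq_lim:
  assumes B: "\<not> (\<exists>k0. \<forall>k\<ge>k0. EE nu (Suc k) \<le> tau nu * EE nu k)" and j: "j < m nu"
  shows "(\<lambda>l. u (qq l) nu j * (1 / rho (qq l) nu)) \<longlonglongrightarrow> 0"
proof (rule Lim_null_comparison)
  show "\<forall>\<^sub>F l in sequentially. norm (u (qq l) nu j * (1 / rho (qq l) nu)) \<le> max (umax nu j) \<bar>u 0 nu j\<bar> * (1 / rho (qq l) nu)"
  proof (intro always_eventually allI)
    fix l
    have "\<bar>u (qq l) nu j\<bar> \<le> max (umax nu j) \<bar>u 0 nu j\<bar>" by (rule U_bound[OF j])
    moreover have "rho (qq l) nu > 0" by (rule rho_pos)
    ultimately show "norm (u (qq l) nu j * (1 / rho (qq l) nu)) \<le> max (umax nu j) \<bar>u 0 nu j\<bar> * (1 / rho (qq l) nu)"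
      by (simp add: divide_right_mono)
  qed
  show "(\<lambda>l. max (umax nu j) \<bar>u 0 nu j\<bar> * (1 / rho (qq l) nu)) \<longlonglongrightarrow> 0"
    using tendsto_mult_right_zero[OF iR_lim[OF B]] .
qed

lemma Mq_neg_lim: assumes j: "j < p nu" shows "(\<lambda>l. min 0 (mu (Suc (qq l)) nu j)) \<longlonglongrightarrow> 0"
proof (rule Lim_null_comparison[OF _ eps'q])
  show "\<forall>\<^sub>F l in sequentially. norm (min 0 (mu (Suc (qq l)) nu j)) \<le> eps' (qq l)"
  proof (intro always_eventually allI)
    fix l
    have "\<bar>min (- h nu j (x (Suc (qq l)))) (mu (Suc (qq l)) nu j)\<bar> \<le> eps' (qq l)" by (rule mu_bound[OF j])
    moreover have "eps' (qq l) \<ge> 0" using calculation by linarith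
    ultimately show "norm (min 0 (mu (Suc (qq l)) nu j)) \<le> eps' (qq l)"
      by (auto simp: abs_le_iff min_def split: if_splits)
  qed
qed

lemma Mq_lim_inactive:
  assumes j: "j < p nu" and hn: "h nu j xbar \<noteq> 0"
  shows "(\<lambda>l. mu (Suc (qq l)) nu j) \<longlonglongrightarrow> 0"
proof (rule Lim_null_comparison[OF _ eps'q])
  define \<delta> where "\<delta> = - h nu j xbar"
  have d: "\<delta> > 0" using hle[OF j] hn by (simp add: \<delta>_def)
  have "(\<lambda>l. - h nu j (x (Suc (qq l)))) \<longlonglongrightarrow> \<delta>"
    unfolding \<delta>_def using isCont_tendsto_compose[OF C1_cont[OF C1_h[OF j]] xq] by (intro tendsto_minus)
  then have e1: "\<forall>\<^sub>F l in sequentially. \<delta> / 2 < - h nu j (x (Suc (qq l)))"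
    using d by (intro order_tendstoD(1)) auto
  have e2: "\<forall>\<^sub>F l in sequentially. eps' (qq l) < \<delta> / 2"
    using d by (intro order_tendstoD(2)[OF eps'q]) auto
  show "\<forall>\<^sub>F l in sequentially. norm (mu (Suc (qq l)) nu j) \<le> eps' (qq l)"
    using e1 e2
  proof eventually_elim
    case (elim l)
    then show ?case using mu_bound[OF j, of "qq l"] by (auto simp: abs_le_iff min_def split: if_splits)
  qed
qed

lemma caseB:
  assumes B: "\<not> (\<exists>k0. \<forall>k\<ge>k0. EE nu (Suc k) \<le> tau nu * EE nu k)"
  shows "\<exists>w. blockv blk nu (grad (\<lambda>y. (L2_set (\<lambda>j. max 0 (g nu j y)) {..<m nu})\<^sup>2) xbar)
          + (\<Sum>j<p nu. w j *\<^sub>R blockv blk nu (grad (h nu j) xbar)) = 0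
        \<and> (\<forall>j<p nu. min (- h nu j xbar) (w j) = 0)"
proof -
  define A where "A = {j. j < p nu \<and> h nu j xbar = 0}"
  define G where "G j z = blockv blk nu (grad (h nu j) z)" for j z
  define y where "y l = x (Suc (qq l))" for l
  define iR where "iR l = 1 / rho (qq l) nu" for l
  define M where "M l j = mu (Suc (qq l)) nu j" for l j
  define U where "U l j = u (qq l) nu j" for l j
  define bg where "bg j z = blockv blk nu (grad (g nu j) z)" for j z
  define bth where "bth z = blockv blk nu (grad (th nu) z)" for z
  define c where "c l j = max 0 (M l j) * iR l" for l j
  define V where "V l = blockv blk nu (grad (\<lambda>z. aug_lag (th nu) (g nu) (m nu) z (u (qq l) nu) (rho (qq l) nu)) (y l))
      + (\<Sum>j<p nu. M l j *\<^sub>R G j (y l))" for l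
  define a where "a l = iR l *\<^sub>R bth (y l) + (\<Sum>j<m nu. max 0 (g nu j (y l) + U l j * iR l) *\<^sub>R bg j (y l))
      + (\<Sum>j\<in>{..<p nu} - A. (iR l * M l j) *\<^sub>R G j (y l)) + (\<Sum>j\<in>A. (iR l * min 0 (M l j)) *\<^sub>R G j (y l))" for l
  define as where "as = (\<Sum>j<m nu. max 0 (g nu j xbar) *\<^sub>R bg j xbar)"
  have Asub: "A \<subseteq> {..<p nu}" by (auto simp: A_def)
  have finA: "finite A" using Asub finite_subset by blast
  have iR0: "iR \<longlonglongrightarrow> 0" unfolding iR_def using iR_lim[OF B] .
  have iRpos: "iR l > 0" for l unfolding iR_def using rho_pos[of "qq l" nu] by simp
  have yl: "y \<longlonglongrightarrow> xbar" unfolding y_def using xq .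
  have Vb: "norm (V l) \<le> eps (qq l)" for l
    unfolding V_def M_def G_def y_def using inexact1[where k="qq l" and nu=nu] .
  obtain Be where Be: "\<And>k. eps k \<le> Be"
    using eps_bdd unfolding bounded_iff by (metis abs_le_D1 rangeI real_norm_def)
  have ident: "a l + (\<Sum>j\<in>A. c l j *\<^sub>R G j (y l)) = iR l *\<^sub>R V l" for l
  proof -
    let ?R = "rho (qq l) nu"
    have Rpos: "?R > 0" by (rule rho_pos)
    have gr: "grad (\<lambda>z. aug_lag (th nu) (g nu) (m nu) z (u (qq l) nu) ?R) (y l)
        = grad (th nu) (y l) + (\<Sum>j<m nu. (?R * max 0 (g nu j (y l) + u (qq l) nu j / ?R)) *\<^sub>R grad (g nu j) (y l))"
      by (rule grad_auglag) (auto intro: C1_diff C1_th C1_g)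
    have s1: "V l = bth (y l) + (\<Sum>j<m nu. (?R * max 0 (g nu j (y l) + U l j * iR l)) *\<^sub>R bg j (y l))
        + (\<Sum>j<p nu. M l j *\<^sub>R G j (y l))"
      unfolding V_def gr bth_def bg_def U_def iR_def
      by (simp add: blockv_add blockv_sum blockv_scaleR)
    have s2: "iR l *\<^sub>R V l = iR l *\<^sub>R bth (y l) + (\<Sum>j<m nu. max 0 (g nu j (y l) + U l j * iR l) *\<^sub>R bg j (y l))
        + (\<Sum>j<p nu. (iR l * M l j) *\<^sub>R G j (y l))"
    proof -
      have e: "iR l * ?R = 1" using Rpos by (simp add: iR_def)
      have e2: "iR l * (?R * t) = t" for t by (simp only: mult.assoc[symmetric] e mult_1_left)
      show ?thesis unfolding s1 by (simp only: scaleR_add_right scaleR_sum_right scaleR_scaleR e2)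
    qed
    have s3: "(\<Sum>j<p nu. (iR l * M l j) *\<^sub>R G j (y l)) = (\<Sum>j\<in>{..<p nu} - A. (iR l * M l j) *\<^sub>R G j (y l))
        + (\<Sum>j\<in>A. (iR l * M l j) *\<^sub>R G j (y l))"
      using sum.subset_diff[OF Asub finite_lessThan] .
    have s4: "(\<Sum>j\<in>A. (iR l * M l j) *\<^sub>R G j (y l)) = (\<Sum>j\<in>A. (iR l * min 0 (M l j)) *\<^sub>R G j (y l))
        + (\<Sum>j\<in>A. c l j *\<^sub>R G j (y l))"
    proof -
      have r: "iR l * M l j = iR l * min 0 (M l j) + c l j" for j
      proof (cases "M l j \<ge> 0")
        case True then show ?thesis by (simp add: c_def mult.commute)
      next
        case False then show ?thesis by (simp add: c_def)
      qed
      have "(iR l * M l j) *\<^sub>R G j (y l) = (iR l * min 0 (M l j)) *\<^sub>R G j (y l) + c l j *\<^sub>R G j (y l)" for j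
        by (simp only: r scaleR_add_left)
      then show ?thesis by (simp only: sum.distrib)
    qed
    show ?thesis unfolding s2 s3 s4 a_def by (simp only: add.assoc)
  qed
  have lim0: "(\<lambda>l. a l + (\<Sum>j\<in>A. c l j *\<^sub>R G j (y l))) \<longlonglongrightarrow> 0"
    unfolding ident
  proof (rule Lim_null_comparison)
    show "\<forall>\<^sub>F l in sequentially. norm (iR l *\<^sub>R V l) \<le> iR l * Be"
    proof (intro always_eventually allI)
      fix l
      have "norm (V l) \<le> Be" using Vb[of l] Be[of "qq l"] by linarith
      then show "norm (iR l *\<^sub>R V l) \<le> iR l * Be" using iRpos[of l] by (simp add: mult_left_mono)
    qed
    show "(\<lambda>l. iR l * Be) \<longlonglongrightarrow> 0" using tendsto_mult_left_zero[OF iR0] .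
  qed
  have t1: "(\<lambda>l. iR l *\<^sub>R bth (y l)) \<longlonglongrightarrow> 0"
  proof -
    have "(\<lambda>l. iR l *\<^sub>R bth (y l)) \<longlonglongrightarrow> 0 *\<^sub>R bth xbar"
      unfolding bth_def by (intro tendsto_scaleR iR0 isCont_tendsto_compose[OF C1_grad_cont[OF C1_th] yl])
    then show ?thesis by simp
  qed
  have t2: "(\<lambda>l. \<Sum>j<m nu. max 0 (g nu j (y l) + U l j * iR l) *\<^sub>R bg j (y l)) \<longlonglongrightarrow> as"
  proof -
    have "(\<lambda>l. \<Sum>j<m nu. max 0 (g nu j (y l) + U l j * iR l) *\<^sub>R bg j (y l))
        \<longlonglongrightarrow> (\<Sum>j<m nu. max 0 (g nu j xbar + 0) *\<^sub>R bg j xbar)"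
    proof (intro tendsto_sum)
      fix j assume "j \<in> {..<m nu}"
      then have j: "j < m nu" by simp
      have Ul: "(\<lambda>l. U l j * iR l) \<longlonglongrightarrow> 0" unfolding U_def iR_def using Uq_lim[OF B j] .
      show "(\<lambda>l. max 0 (g nu j (y l) + U l j * iR l) *\<^sub>R bg j (y l)) \<longlonglongrightarrow> max 0 (g nu j xbar + 0) *\<^sub>R bg j xbar"
        unfolding bg_def
        by (intro tendsto_scaleR tendsto_max tendsto_const tendsto_add Ul
            isCont_tendsto_compose[OF C1_grad_cont[OF C1_g[OF j]] yl]
            isCont_tendsto_compose[OF C1_cont[OF C1_g[OF j]] yl])
    qed
    then show ?thesis by (simp add: as_def)
  qed
  have t3: "(\<lambda>l. \<Sum>j\<in>{..<p nu} - A. (iR l * M l j) *\<^sub>R G j (y l)) \<longlonglongrightarrow> 0"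
  proof (rule tendsto_null_sum)
    fix j assume "j \<in> {..<p nu} - A"
    then have j: "j < p nu" and hn: "h nu j xbar \<noteq> 0" by (auto simp: A_def)
    have "(\<lambda>l. (iR l * M l j) *\<^sub>R G j (y l)) \<longlonglongrightarrow> (0 * 0) *\<^sub>R G j xbar"
      unfolding G_def M_def
      by (intro tendsto_scaleR tendsto_mult iR0 Mq_lim_inactive[OF j hn]
            isCont_tendsto_compose[OF C1_grad_cont[OF C1_h[OF j]] yl])
    then show "(\<lambda>l. (iR l * M l j) *\<^sub>R G j (y l)) \<longlonglongrightarrow> 0" by simp
  qed
  have t4: "(\<lambda>l. \<Sum>j\<in>A. (iR l * min 0 (M l j)) *\<^sub>R G j (y l)) \<longlonglongrightarrow> 0"
  proof (rule tendsto_null_sum)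
    fix j assume "j \<in> A"
    then have j: "j < p nu" by (auto simp: A_def)
    have "(\<lambda>l. (iR l * min 0 (M l j)) *\<^sub>R G j (y l)) \<longlonglongrightarrow> (0 * 0) *\<^sub>R G j xbar"
      unfolding G_def M_def
      by (intro tendsto_scaleR tendsto_mult iR0 Mq_neg_lim[OF j]
            isCont_tendsto_compose[OF C1_grad_cont[OF C1_h[OF j]] yl])
    then show "(\<lambda>l. (iR l * min 0 (M l j)) *\<^sub>R G j (y l)) \<longlonglongrightarrow> 0" by simp
  qed
  have alim: "a \<longlonglongrightarrow> as"
  proof -
    have "a \<longlonglongrightarrow> 0 + as + 0 + 0" unfolding a_def by (intro tendsto_add t1 t2 t3 t4)
    then show ?thesis by simp
  qed
  have cont: "isCont (G j) xbar" if "j \<in> A" for j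
    unfolding G_def using that by (intro C1_grad_cont C1_h) (auto simp: A_def)
  have cnn: "0 \<le> c l j" for l j
    unfolding c_def using iRpos[of l] by simp
  have cp: "eventually (\<lambda>z. lin_dep_fam (\<lambda>j. G j z) J) (nhds xbar)"
    if "J \<subseteq> A" "pos_lin_dep (\<lambda>j. G j xbar) J" for J
    using cpld[of nu] that unfolding CPLD_def G_def A_def by blast
  from key[OF finA cont yl alim cnn lim0 cp] obtain w where
    w: "\<forall>j\<in>A. 0 \<le> w j" "as + (\<Sum>j\<in>A. w j *\<^sub>R G j xbar) = 0" by blast
  define W where "W j = (if j \<in> A then 2 * w j else 0)" for j
  have gF: "blockv blk nu (grad (\<lambda>y. (L2_set (\<lambda>j. max 0 (g nu j y)) {..<m nu})\<^sup>2) xbar) = 2 *\<^sub>R as"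
  proof -
    have "grad (\<lambda>y. (L2_set (\<lambda>j. max 0 (g nu j y)) {..<m nu})\<^sup>2) xbar
        = (\<Sum>j<m nu. (2 * max 0 (g nu j xbar)) *\<^sub>R grad (g nu j) xbar)"
      by (rule grad_sumsq) (auto intro: C1_diff C1_g)
    then show ?thesis
      by (simp add: as_def bg_def blockv_sum blockv_scaleR scaleR_sum_right)
  qed
  have sW: "(\<Sum>j<p nu. W j *\<^sub>R G j xbar) = 2 *\<^sub>R (\<Sum>j\<in>A. w j *\<^sub>R G j xbar)"
  proof -
    have "(\<Sum>j<p nu. W j *\<^sub>R G j xbar) = (\<Sum>j\<in>A. W j *\<^sub>R G j xbar)"
      using Asub by (intro sum.mono_neutral_right) (auto simp: W_def)
    also have "\<dots> = (\<Sum>j\<in>A. (2 * w j) *\<^sub>R G j xbar)"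
      by (intro sum.cong) (auto simp: W_def)
    finally show ?thesis by (simp add: scaleR_sum_right)
  qed
  have eq: "blockv blk nu (grad (\<lambda>y. (L2_set (\<lambda>j. max 0 (g nu j y)) {..<m nu})\<^sup>2) xbar)
          + (\<Sum>j<p nu. W j *\<^sub>R blockv blk nu (grad (h nu j) xbar)) = 0"
  proof -
    have "blockv blk nu (grad (\<lambda>y. (L2_set (\<lambda>j. max 0 (g nu j y)) {..<m nu})\<^sup>2) xbar)
          + (\<Sum>j<p nu. W j *\<^sub>R blockv blk nu (grad (h nu j) xbar)) = 2 *\<^sub>R (as + (\<Sum>j\<in>A. w j *\<^sub>R G j xbar))"
      using gF sW unfolding G_def by (simp add: scaleR_add_right)
    then show ?thesis using w(2) by simp
  qed
  have compl: "\<forall>j<p nu. min (- h nu j xbar) (W j) = 0"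
  proof (intro allI impI)
    fix j assume j: "j < p nu"
    show "min (- h nu j xbar) (W j) = 0"
    proof (cases "j \<in> A")
      case True
      then show ?thesis using w(1) by (auto simp: A_def W_def)
    next
      case False
      then show ?thesis using hle[OF j] by (auto simp: W_def)
    qed
  qed
  show ?thesis using eq compl by blast
qed

lemma main: "feas_KKT blk g m h p xbar"
  unfolding feas_KKT_def
proof
  fix nu
  show "\<exists>w. blockv blk nu (grad (\<lambda>y. (L2_set (\<lambda>j. max 0 (g nu j y)) {..<m nu})\<^sup>2) xbar)
          + (\<Sum>j<p nu. w j *\<^sub>R blockv blk nu (grad (h nu j) xbar)) = 0
        \<and> (\<forall>j<p nu. min (- h nu j xbar) (w j) = 0)"
  proof (cases "\<exists>k0. \<forall>k\<ge>k0. EE nu (Suc k) \<le> tau nu * EE nu k")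
    case True
    have gle: "g nu j xbar \<le> 0" if "j < m nu" for j using caseA[OF True that] .
    have "grad (\<lambda>y. (L2_set (\<lambda>j. max 0 (g nu j y)) {..<m nu})\<^sup>2) xbar
        = (\<Sum>j<m nu. (2 * max 0 (g nu j xbar)) *\<^sub>R grad (g nu j) xbar)"
      by (rule grad_sumsq) (auto intro: C1_diff C1_g)
    also have "\<dots> = 0" using gle by (intro sum.neutral) auto
    finally have z: "grad (\<lambda>y. (L2_set (\<lambda>j. max 0 (g nu j y)) {..<m nu})\<^sup>2) xbar = 0" .
    have f1: "blockv blk nu (grad (\<lambda>y. (L2_set (\<lambda>j. max 0 (g nu j y)) {..<m nu})\<^sup>2) xbar)
          + (\<Sum>j<p nu. (\<lambda>j. 0::real) j *\<^sub>R blockv blk nu (grad (h nu j) xbar)) = 0"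
      unfolding z by (simp add: blockv_zero)
    have f2: "\<forall>j<p nu. min (- h nu j xbar) ((\<lambda>j. 0::real) j) = 0"
    proof (intro allI impI)
      fix j assume "j < p nu"
      then have "h nu j xbar \<le> 0" by (rule hle)
      then show "min (- h nu j xbar) ((\<lambda>j. 0::real) j) = 0" by (simp add: min_def)
    qed
    show ?thesis
    proof (rule exI[of _ "\<lambda>j::nat. 0::real"])
      show "blockv blk nu (grad (\<lambda>y. (L2_set (\<lambda>j. max 0 (g nu j y)) {..<m nu})\<^sup>2) xbar)
          + (\<Sum>j<p nu. (\<lambda>j. 0::real) j *\<^sub>R blockv blk nu (grad (h nu j) xbar)) = 0
        \<and> (\<forall>j<p nu. min (- h nu j xbar) ((\<lambda>j. 0::real) j) = 0)"
        using f1 f2 by blast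
    qed
  next
    case False
    then show ?thesis by (rule caseB)
  qed
qed

end

theorem corollary4p2:
  fixes blk :: "'n::finite \<Rightarrow> 'p::finite"
    and th :: "'p \<Rightarrow> real ^ 'n \<Rightarrow> real"
    and g :: "'p \<Rightarrow> nat \<Rightarrow> real ^ 'n \<Rightarrow> real" and m :: "'p \<Rightarrow> nat"
    and h :: "'p \<Rightarrow> nat \<Rightarrow> real ^ 'n \<Rightarrow> real" and p :: "'p \<Rightarrow> nat"
    and x :: "nat \<Rightarrow> real ^ 'n"
    and lam :: "nat \<Rightarrow> 'p \<Rightarrow> nat \<Rightarrow> real"
    and mu :: "nat \<Rightarrow> 'p \<Rightarrow> nat \<Rightarrow> real"
    and u :: "nat \<Rightarrow> 'p \<Rightarrow> nat \<Rightarrow> real"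
    and rho :: "nat \<Rightarrow> 'p \<Rightarrow> real"
    and umax :: "'p \<Rightarrow> nat \<Rightarrow> real"
    and tau gamma :: "'p \<Rightarrow> real"
    and eps eps' :: "nat \<Rightarrow> real"
    and xbar :: "real ^ 'n"
  assumes C1_th: "\<And>nu. C1 (th nu)"
    and C1_g: "\<And>nu j. j < m nu \<Longrightarrow> C1 (g nu j)"
    and C1_h: "\<And>nu j. j < p nu \<Longrightarrow> C1 (h nu j)"
    and umax_nonneg: "\<And>nu j. j < m nu \<Longrightarrow> umax nu j \<ge> 0"
    and tau: "\<And>nu. 0 < tau nu \<and> tau nu < 1"
    and gamma: "\<And>nu. gamma nu > 1"
    and rho0: "\<And>nu. rho 0 nu > 0"
    and step_lam: "\<And>k nu j. j < m nu \<Longrightarrow>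
        lam (Suc k) nu j = max 0 (u k nu j + rho k nu * g nu j (x (Suc k)))"
    and step_rho: "\<And>k nu. rho (Suc k) nu =
        (if L2_set (\<lambda>j. min (- g nu j (x (Suc k))) (lam (Suc k) nu j)) {..<m nu}
              \<le> tau nu * L2_set (\<lambda>j. min (- g nu j (x k)) (lam k nu j)) {..<m nu}
         then rho k nu else gamma nu * rho k nu)"
    and step_u: "\<And>k nu j. j < m nu \<Longrightarrow> u (Suc k) nu j = min (lam (Suc k) nu j) (umax nu j)"
    and inexact1: "\<And>k nu.
        norm (blockv blk nu (grad (\<lambda>y. aug_lag (th nu) (g nu) (m nu) y (u k nu) (rho k nu)) (x (Suc k)))
              + (\<Sum>j<p nu. mu (Suc k) nu j *\<^sub>R blockv blk nu (grad (h nu j) (x (Suc k)))))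
        \<le> eps k"
    and inexact2: "\<And>k nu.
        L2_set (\<lambda>j. min (- h nu j (x (Suc k))) (mu (Suc k) nu j)) {..<p nu} \<le> eps' k"
    and eps_nonneg: "\<And>k. eps k \<ge> 0"
    and eps_bdd: "bounded (range eps)"
    and eps'_lim: "eps' \<longlonglongrightarrow> 0"
    and limpt: "\<exists>r. strict_mono r \<and> (x \<circ> r) \<longlonglongrightarrow> xbar"
    and cpld: "\<And>nu. CPLD blk nu (h nu) (p nu) xbar"
  shows "feas_KKT blk g m h p xbar"
proof -
  interpret gnep blk th g m h p x lam mu u rho umax tau gamma eps eps' xbar
    by (rule gnep.intro; fact assms)
  show ?thesis by (rule main)
qed

end
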